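(* Let $f:(0,1)\to(0,1)$ be of the form $f(p)=1-\sum_{k=1}^\infty c_k(1-p)^k$ with $c_k\ge0$, $\sum_k c_k=1$, and suppose $\lim_{p\to0}f(p)/p=\infty$ and $f'(p)=\Omega(f(p)/p)$ as $p\to0$. Then for every (possibly randomized) fast Bernoulli factory for $f$ on $(0,1)$ there exist $C,\delta>0$ such that $\mathbb E[N]\ge C f(p)/p$ for all $p<\delta$. Consequently, since Algorithm 1 (a fast factory for $f$ with $\mathbb E[N]=f(p)/p$) is available, Algorithm 1 is asymptotically optimal as $p\to0$ among all fast factories for $f$.
   Context: $\Omega$: for positive $f_1,f_2$, $f_1(x)=\Omega(f_2(x))$ as $x\to x_0$ means there are $C,\delta>0$ with $f_1(x)\ge Cf_2(x)$ for $|x-x_0|<\delta$. Let $X=(X_i)$ be i.i.d. Bernoulli($p$), $p\in(0,1)$, and $U=(U_i)$ i.i.d. uniform on $(0,1)$ independent of $X$. A (possibly randomized) Bernoulli factory for $f$ consists of measurable stopping functions $\tau_i(x_1,u_1;\dots;x_i,u_i)\in\{0,1\}$ and measurable output functions $\gamma_n$; $N=\min\{i:\tau_i=1\}$ is finite a.s. and $Y=\gamma_N(X_1,U_1;\dots;X_N,U_N)$ satisfies $\Pr[Y=1]=f(p)$. It is fast if for every $p$ there exist $A>0$, $\beta<1$ with $\Pr[N>n]\le A\beta^n$ for all $n$. Algorithm 1: with $d_k=c_k/(1-\sum_{j<k}c_j)$, for $i=1,2,\dots$ take $X_i$, set $V_i=1$ if $U_i<d_i$ else $0$; if $V_i=1$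 or $X_i=1$ output $Y=X_i$ and stop, else continue; $N$ is the final $i$. *)

theory Defs
  imports "HOL-Probability.Probability"
begin

text \<open>Sample points are sequences omega :: nat => bool * real; the pair omega (i-1) is
  (X_i, U_i) (0-based indexing of the underlying sequence).\<close>

definition step_measure :: "real \<Rightarrow> (bool \<times> real) measure" where
  "step_measure p = measure_pmf (bernoulli_pmf p) \<Otimes>\<^sub>M uniform_measure lborel {0<..<1}"

definition bf_space :: "real \<Rightarrow> (nat \<Rightarrow> bool \<times> real) measure" where
  "bf_space p = (\<Pi>\<^sub>M i\<in>UNIV. step_measure p)"

text \<open>The measurable space on which stopping and output functions are required to be
  measurable (same sigma-algebra as bf_space p for every p).\<close>
definition seq_space :: "(nat \<Rightarrow> bool \<times> real) measure" where
  "seq_space = (\<Pi>\<^sub>M i\<in>UNIV. (count_space UNIV \<Otimes>\<^sub>M (borel :: real measure)))"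

definition depends_on_prefix :: "nat \<Rightarrow> ((nat \<Rightarrow> bool \<times> real) \<Rightarrow> 'b) \<Rightarrow> bool" where
  "depends_on_prefix n g \<longleftrightarrow> (\<forall>\<omega> \<omega>'. (\<forall>i<n. \<omega> i = \<omega>' i) \<longrightarrow> g \<omega> = g \<omega>')"

definition stop_time :: "(nat \<Rightarrow> (nat \<Rightarrow> bool \<times> real) \<Rightarrow> bool) \<Rightarrow> (nat \<Rightarrow> bool \<times> real) \<Rightarrow> nat" where
  "stop_time \<tau> \<omega> = (LEAST n. 1 \<le> n \<and> \<tau> n \<omega>)"

definition bernoulli_factory ::
  "(real \<Rightarrow> real) \<Rightarrow> (nat \<Rightarrow> (nat \<Rightarrow> bool \<times> real) \<Rightarrow> bool)
     \<Rightarrow> (nat \<Rightarrow> (nat \<Rightarrow> bool \<times> real) \<Rightarrow> bool) \<Rightarrow> bool" where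
  "bernoulli_factory f \<tau> \<gamma> \<longleftrightarrow>
     (\<forall>n\<ge>1. \<tau> n \<in> measurable seq_space (count_space UNIV) \<and> depends_on_prefix n (\<tau> n)
            \<and> \<gamma> n \<in> measurable seq_space (count_space UNIV) \<and> depends_on_prefix n (\<gamma> n)) \<and>
     (\<forall>p\<in>{0<..<1}.
        (AE \<omega> in bf_space p. \<exists>n\<ge>1. \<tau> n \<omega>) \<and>
        measure (bf_space p) {\<omega> \<in> space (bf_space p). (\<exists>n\<ge>1. \<tau> n \<omega>) \<and> \<gamma> (stop_time \<tau> \<omega>) \<omega>} = f p)"

definition fast_factory ::
  "(real \<Rightarrow> real) \<Rightarrow> (nat \<Rightarrow> (nat \<Rightarrow> bool \<times> real) \<Rightarrow> bool)
     \<Rightarrow> (nat \<Rightarrow> (nat \<Rightarrow> bool \<times> real) \<Rightarrow> bool) \<Rightarrow> bool" where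
  "fast_factory f \<tau> \<gamma> \<longleftrightarrow> bernoulli_factory f \<tau> \<gamma> \<and>
     (\<forall>p\<in>{0<..<1}. \<exists>A>0. \<exists>\<beta><1. \<forall>n::nat.
        measure (bf_space p) {\<omega> \<in> space (bf_space p). \<not> (\<exists>k\<in>{1..n}. \<tau> k \<omega>)} \<le> A * \<beta> ^ n)"

definition expected_time :: "real \<Rightarrow> (nat \<Rightarrow> (nat \<Rightarrow> bool \<times> real) \<Rightarrow> bool) \<Rightarrow> ennreal" where
  "expected_time p \<tau> = (\<integral>\<^sup>+ \<omega>. ennreal (real (stop_time \<tau> \<omega>)) \<partial>bf_space p)"

end

theory Submission imports Defs begin

abbreviation S0 :: "(bool \<times> real) measure" where
  "S0 \<equiv> count_space UNIV \<Otimes>\<^sub>M (borel :: real measure)"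

lemma sets_step[measurable_cong]: "sets (step_measure p) = sets S0"
  unfolding step_measure_def
  by (intro sets_pair_measure_cong) auto

lemma space_step[simp]: "space (step_measure p) = UNIV"
  using sets_eq_imp_space_eq[OF sets_step[of p]] by (simp add: space_pair_measure)

lemma prob_step: "prob_space (step_measure p)"
  unfolding step_measure_def
  by (intro prob_space_pair prob_space_measure_pmf prob_space_uniform_measure) auto

lemma sets_bf[measurable_cong]: "sets (bf_space p) = sets seq_space"
  unfolding bf_space_def seq_space_def
  by (intro sets_PiM_cong) (auto simp: sets_step)

lemma space_bf[simp]: "space (bf_space p) = UNIV"
  unfolding bf_space_def by (simp add: space_PiM)

lemma space_seq[simp]: "space seq_space = UNIV"
  unfolding seq_space_def by (simp add: space_PiM space_pair_measure)

lemma prob_bf: "prob_space (bf_space p)"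
  unfolding bf_space_def by (intro prob_space_PiM prob_step)

lemma meas_comp[measurable]: "(\<lambda>\<omega>. \<omega> j) \<in> measurable (bf_space p) S0"
proof -
  have "(\<lambda>\<omega>. \<omega> j) \<in> measurable (bf_space p) (step_measure p)"
    unfolding bf_space_def by (rule measurable_component_singleton) auto
  then show ?thesis by (simp add: measurable_cong_sets[OF refl sets_step])
qed

lemma keylemma:
  fixes K :: "nat set" and W :: "nat \<Rightarrow> (bool\<times>real) set" and g :: "nat \<Rightarrow> bool\<times>real \<Rightarrow> bool\<times>real"
  assumes K: "finite K"
  and W: "\<And>j. W j \<in> sets S0"
  and g: "\<And>j. g j \<in> measurable S0 S0"
  and ind: "\<And>j B. j \<in> K \<Longrightarrow> B \<in> sets S0 \<Longrightarrow> emeasure (step_measure p) (W j \<inter> g j -` B)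
              = emeasure (step_measure p) (W j) * emeasure (step_measure p) (g j -` B)"
  and D: "D \<in> sets seq_space"
  shows "emeasure (bf_space p) {\<omega>. (\<forall>j\<in>K. \<omega> j \<in> W j) \<and> (\<lambda>j. g j (\<omega> j)) \<in> D}
       = (\<Prod>j\<in>K. emeasure (step_measure p) (W j)) * emeasure (PiM UNIV (\<lambda>j. distr (step_measure p) S0 (g j))) D"
proof -
  define F where "F = {\<omega>::nat \<Rightarrow> bool\<times>real. \<forall>j\<in>K. \<omega> j \<in> W j}"
  define G where "G = (\<lambda>(\<omega>::nat \<Rightarrow> bool\<times>real) j. g j (\<omega> j))"
  define Q where "Q = PiM UNIV (\<lambda>j. distr (step_measure p) S0 (g j))"
  define c where "c = (\<Prod>j\<in>K. emeasure (step_measure p) (W j))"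
  interpret P: prob_space "bf_space p" by (rule prob_bf)
  have probd: "prob_space (distr (step_measure p) S0 (g j))" for j
    by (intro prob_space.prob_space_distr prob_step) (simp add: measurable_cong_sets[OF sets_step refl] g)
  have gstep: "g j \<in> measurable (step_measure p) S0" for j
    by (simp add: measurable_cong_sets[OF sets_step refl] g)
  interpret Qp: prob_space Q unfolding Q_def by (intro prob_space_PiM probd)
  have sets_Q: "sets Q = sets seq_space"
    unfolding Q_def seq_space_def by (intro sets_PiM_cong) auto
  have Fm: "F \<in> sets (bf_space p)"
  proof -
    have "F = {\<omega> \<in> space (bf_space p). \<forall>j\<in>K. \<omega> j \<in> W j}" by (simp add: F_def)
    also have "\<dots> \<in> sets (bf_space p)"
      using K W by measurable
    finally show ?thesis .
  qed
  have Gm: "G \<in> measurable (bf_space p) Q"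
    unfolding G_def Q_def
    by (rule measurable_PiM_single') (auto intro: measurable_compose[OF meas_comp g] simp: space_PiM space_pair_measure)
  have Gpre: "G -` X \<in> sets (bf_space p)" if "X \<in> sets seq_space" for X
  proof -
    have Gm': "G \<in> measurable (bf_space p) seq_space"
      using Gm by (simp add: measurable_cong_sets[OF refl sets_Q])
    have "G -` X \<inter> space (bf_space p) \<in> sets (bf_space p)"
      by (rule measurable_sets[OF Gm' that])
    then show ?thesis by simp
  qed
  define A where "A = distr (density (bf_space p) (indicator F)) Q G"
  define B where "B = scale_measure c Q"
  have eA: "emeasure A X = emeasure (bf_space p) (F \<inter> G -` X)" if "X \<in> sets seq_space" for X
  proof -
    have "emeasure A X = emeasure (density (bf_space p) (indicator F)) (G -` X \<inter> space (bf_space p))"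
      unfolding A_def using that sets_Q Gm by (subst emeasure_distr) auto
    also have "\<dots> = emeasure (bf_space p) (F \<inter> G -` X)"
      using Fm Gpre[OF that] by (simp add: emeasure_restricted)
    finally show ?thesis .
  qed
  have "A = B"
  proof (rule measure_eqI_PiM_infinite[where I=UNIV and M="\<lambda>j. distr (step_measure p) S0 (g j)"])
    show "sets A = sets (PiM UNIV (\<lambda>j. distr (step_measure p) S0 (g j)))"
      unfolding A_def Q_def by simp
    show "sets B = sets (PiM UNIV (\<lambda>j. distr (step_measure p) S0 (g j)))"
      unfolding B_def Q_def by simp
    show "finite_measure A"
    proof (rule finite_measureI)
      have "emeasure A (space A) = emeasure (bf_space p) (F \<inter> G -` space A)"
        using eA[of "space A"] unfolding A_def by (simp add: sets_Q[symmetric])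
      also have "\<dots> \<le> 1"
        by (rule P.emeasure_le_1)
      finally show "emeasure A (space A) \<noteq> \<infinity>" by (auto simp: top_unique)
    qed
    fix Y J assume J: "finite J" "J \<subseteq> (UNIV::nat set)" and Y: "\<And>i. i \<in> J \<Longrightarrow> Y i \<in> sets (distr (step_measure p) S0 (g i))"
    have YS: "Y i \<in> sets S0" if "i \<in> J" for i using Y[OF that] by simp
    let ?R = "prod_emb UNIV (\<lambda>j. distr (step_measure p) S0 (g j)) J (Pi\<^sub>E J Y)"
    have Rm: "?R \<in> sets seq_space"
      using J Y by (simp add: sets_Q[symmetric] Q_def)
    define W' where "W' j = (if j \<in> K then W j else UNIV)" for j
    define Y' where "Y' j = (if j \<in> J then Y j else UNIV)" for j
    have seteq: "F \<inter> G -` ?R = prod_emb UNIV (\<lambda>_. step_measure p) (K \<union> J) (Pi\<^sub>E (K \<union> J) (\<lambda>j. W' j \<inter> g j -` Y' j))"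
      by (auto simp: F_def G_def prod_emb_def PiE_iff W'_def Y'_def space_PiM space_pair_measure; metis UnI1 UnI2)
    have W'm: "W' j \<in> sets S0" for j using W sets.top[of S0] by (simp add: W'_def space_pair_measure)
    have Y'm: "Y' j \<in> sets S0" for j using YS sets.top[of S0] by (simp add: Y'_def space_pair_measure)
    have gY: "g j -` Y' j \<in> sets S0" for j
      using measurable_sets[OF g Y'm, of j j] by (simp add: space_pair_measure)
    interpret S: prob_space "step_measure p" by (rule prob_step)
    have stepfac: "emeasure (step_measure p) (W' j \<inter> g j -` Y' j) = emeasure (step_measure p) (W' j) * emeasure (step_measure p) (g j -` Y' j)" for j
    proof (cases "j \<in> K")
      case True then show ?thesis using ind[OF True Y'm] by (simp add: W'_def)
    next
      case False
      show ?thesis using False S.emeasure_space_1 by (simp add: W'_def)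
    qed
    have "emeasure A ?R = emeasure (bf_space p) (F \<inter> G -` ?R)" using eA[OF Rm] .
    also have "\<dots> = (\<Prod>j\<in>K \<union> J. emeasure (step_measure p) (W' j \<inter> g j -` Y' j))"
      unfolding seteq bf_space_def
      using K J W'm gY
      by (subst emeasure_PiM_emb) (auto intro!: prob_step simp: sets_step)
    also have "\<dots> = (\<Prod>j\<in>K \<union> J. emeasure (step_measure p) (W' j)) * (\<Prod>j\<in>K \<union> J. emeasure (step_measure p) (g j -` Y' j))"
      by (simp add: stepfac prod.distrib)
    also have "(\<Prod>j\<in>K \<union> J. emeasure (step_measure p) (W' j)) = c"
      unfolding c_def using K J S.emeasure_space_1
      by (intro prod.mono_neutral_cong_right) (auto simp: W'_def)
    also have "(\<Prod>j\<in>K \<union> J. emeasure (step_measure p) (g j -` Y' j)) = (\<Prod>j\<in>J. emeasure (distr (step_measure p) S0 (g j)) (Y j))"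
      using K J S.emeasure_space_1 YS
      by (intro prod.mono_neutral_cong_right)
         (auto simp: Y'_def emeasure_distr[OF gstep])
    also have "\<dots> = emeasure Q ?R"
      unfolding Q_def using J Y by (subst emeasure_PiM_emb) (auto intro!: probd)
    finally show "emeasure A ?R = emeasure B ?R"
      by (simp add: B_def)
  qed
  have "emeasure (bf_space p) (F \<inter> G -` D) = emeasure A D" using eA[OF D] by simp
  also have "\<dots> = c * emeasure Q D" unfolding \<open>A = B\<close> B_def by simp
  finally show ?thesis unfolding F_def G_def c_def Q_def by (simp add: Int_def)
qed

lemma keyset:
  fixes K :: "nat set" and W :: "nat \<Rightarrow> (bool\<times>real) set" and g :: "nat \<Rightarrow> bool\<times>real \<Rightarrow> bool\<times>real"
  assumes K: "finite K"
  and W: "\<And>j. W j \<in> sets S0"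
  and g: "\<And>j. g j \<in> measurable S0 S0"
  and D: "D \<in> sets seq_space"
  shows "{\<omega>. (\<forall>j\<in>K. \<omega> j \<in> W j) \<and> (\<lambda>j. g j (\<omega> j)) \<in> D} \<in> sets (bf_space p)"
proof -
  have Fm: "{\<omega>. \<forall>j\<in>K. \<omega> j \<in> W j} \<in> sets (bf_space p)"
  proof -
    have "{\<omega>. \<forall>j\<in>K. \<omega> j \<in> W j} = {\<omega> \<in> space (bf_space p). \<forall>j\<in>K. \<omega> j \<in> W j}" by simp
    also have "\<dots> \<in> sets (bf_space p)"
      using K W by measurable
    finally show ?thesis .
  qed
  have Gm: "(\<lambda>\<omega> j. g j (\<omega> j)) \<in> measurable (bf_space p) seq_space"
    unfolding seq_space_def
    by (rule measurable_PiM_single') (auto intro: measurable_compose[OF meas_comp g] simp: space_PiM space_pair_measure)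
  have "(\<lambda>\<omega> j. g j (\<omega> j)) -` D \<inter> space (bf_space p) \<in> sets (bf_space p)"
    by (rule measurable_sets[OF Gm D])
  then have "(\<lambda>\<omega> j. g j (\<omega> j)) -` D \<in> sets (bf_space p)" by simp
  from sets.Int[OF Fm this] show ?thesis by (simp add: Int_def)
qed

lemma step_times:
  assumes "B \<in> sets borel" "0 \<le> p" "p \<le> 1"
  shows "emeasure (step_measure p) (A \<times> B) = emeasure (measure_pmf (bernoulli_pmf p)) A * emeasure (uniform_measure lborel {0<..<1::real}) B"
proof -
  interpret U: prob_space "uniform_measure lborel {0<..<1::real}"
    by (intro prob_space_uniform_measure) auto
  show ?thesis unfolding step_measure_def
    using assms by (intro U.emeasure_pair_measure_Times) auto
qed

lemma bern_False: "0 \<le> p \<Longrightarrow> p \<le> 1 \<Longrightarrow> emeasure (measure_pmf (bernoulli_pmf p)) {False} = ennreal (1 - p)"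
  by (simp add: emeasure_pmf_single)

lemma bern_True: "0 \<le> p \<Longrightarrow> p \<le> 1 \<Longrightarrow> emeasure (measure_pmf (bernoulli_pmf p)) {True} = ennreal p"
  by (simp add: emeasure_pmf_single)

lemma unif_UNIV: "emeasure (uniform_measure lborel {0<..<1::real}) UNIV = 1"
proof -
  interpret U: prob_space "uniform_measure lborel {0<..<1::real}"
    by (intro prob_space_uniform_measure) auto
  show ?thesis using U.emeasure_space_1 by simp
qed

lemma bern_UNIV: "emeasure (measure_pmf (bernoulli_pmf p)) UNIV = 1"
  using prob_space.emeasure_space_1[OF prob_space_measure_pmf] by simp


definition Z1 :: "(bool \<times> real) measure" where
  "Z1 = distr (uniform_measure lborel {0<..<1::real}) S0 (\<lambda>u. (False, u))"

lemma pre_z1: "B \<in> sets S0 \<Longrightarrow> Pair False -` B \<in> sets borel"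
proof -
  assume B: "B \<in> sets S0"
  have m: "(\<lambda>u::real. (False, u)) \<in> measurable borel S0" by measurable
  show ?thesis using measurable_sets[OF m B] by (simp add: vimage_def)
qed

lemma z1_meas: "(\<lambda>s::bool\<times>real. (False, snd s)) \<in> measurable S0 S0"
  by measurable

lemma z1_vimage: "(\<lambda>s::bool\<times>real. (False, snd s)) -` B = UNIV \<times> Pair False -` B"
  by auto

lemma distr_z1: assumes "0 \<le> p" "p \<le> 1"
  shows "distr (step_measure p) S0 (\<lambda>s. (False, snd s)) = Z1"
proof (rule measure_eqI)
  show "sets (distr (step_measure p) S0 (\<lambda>s. (False, snd s))) = sets Z1" by (simp add: Z1_def)
  fix B assume "B \<in> sets (distr (step_measure p) S0 (\<lambda>s. (False, snd s)))"
  then have B: "B \<in> sets S0" by simp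
  have m1: "(\<lambda>s. (False, snd s)) \<in> measurable (step_measure p) S0"
    by (simp add: measurable_cong_sets[OF sets_step refl] z1_meas)
  have m2: "(\<lambda>u. (False, u)) \<in> measurable (uniform_measure lborel {0<..<1::real}) S0"
    by (simp add: measurable_cong_sets[OF sets_uniform_measure refl])
  have "emeasure (distr (step_measure p) S0 (\<lambda>s. (False, snd s))) B = emeasure (step_measure p) (UNIV \<times> Pair False -` B)"
    using B by (simp add: emeasure_distr[OF m1] z1_vimage)
  also have "\<dots> = emeasure (uniform_measure lborel {0<..<1::real}) (Pair False -` B)"
    using B assms by (simp add: step_times pre_z1 bern_UNIV)
  also have "\<dots> = emeasure Z1 B"
    unfolding Z1_def using B by (simp add: emeasure_distr[OF m2] vimage_def)
  finally show "emeasure (distr (step_measure p) S0 (\<lambda>s. (False, snd s))) B = emeasure Z1 B" .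
qed

lemma En_meas:
  assumes p: "0 \<le> p" "p \<le> 1" and D: "D \<in> sets seq_space"
  shows "emeasure (bf_space p) {\<omega>. (\<forall>j\<in>{..<n}. \<omega> j \<in> {False} \<times> UNIV) \<and> (\<lambda>j. (False, snd (\<omega> j))) \<in> D}
     = ennreal ((1 - p) ^ n) * emeasure (PiM UNIV (\<lambda>_. Z1)) D"
proof -
  have W: "{False} \<times> UNIV \<in> sets S0" by simp
  have ind: "emeasure (step_measure p) ({False} \<times> UNIV \<inter> (\<lambda>s. (False, snd s)) -` B) =
     emeasure (step_measure p) ({False} \<times> UNIV) * emeasure (step_measure p) ((\<lambda>s. (False, snd s)) -` B)"
    if B: "B \<in> sets S0" for B
  proof -
    have "{False} \<times> UNIV \<inter> (\<lambda>s::bool\<times>real. (False, snd s)) -` B = {False} \<times> Pair False -` B" by auto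
    then show ?thesis using p pre_z1[OF B]
      by (simp add: z1_vimage step_times bern_False bern_UNIV unif_UNIV)
  qed
  have "emeasure (bf_space p) {\<omega>. (\<forall>j\<in>{..<n}. \<omega> j \<in> {False} \<times> UNIV) \<and> (\<lambda>j. (False, snd (\<omega> j))) \<in> D}
     = (\<Prod>j\<in>{..<n}. emeasure (step_measure p) ({False} \<times> UNIV)) * emeasure (PiM UNIV (\<lambda>j. distr (step_measure p) S0 (\<lambda>s. (False, snd s)))) D"
    by (rule keylemma[where g="\<lambda>_ s. (False, snd s)" and W="\<lambda>_. {False} \<times> UNIV"]) (use ind D z1_meas in auto)
  also have "(\<Prod>j\<in>{..<n}. emeasure (step_measure p) ({False} \<times> UNIV)) = ennreal ((1 - p) ^ n)"
    using p by (simp add: step_times bern_False unif_UNIV ennreal_power)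
  also have "(\<lambda>j. distr (step_measure p) S0 (\<lambda>s. (False, snd s))) = (\<lambda>_. Z1)"
    using distr_z1[OF p] by simp
  finally show ?thesis .
qed


lemma Hi_meas:
  assumes p: "0 \<le> p" "p \<le> 1" and D: "D \<in> sets seq_space"
  shows "emeasure (bf_space p) {\<omega>. \<omega> i \<in> {True} \<times> UNIV \<and> (\<lambda>j. if j = i then (False, 0) else \<omega> j) \<in> D}
     = ennreal p * emeasure (bf_space p) {\<omega>. (\<lambda>j. if j = i then (False, 0) else \<omega> j) \<in> D}"
proof -
  interpret S: prob_space "step_measure p" by (rule prob_step)
  have gm: "(\<lambda>s::bool\<times>real. if j = i then (False, 0) else s) \<in> measurable S0 S0" for j
    by (cases "j = i") auto
  have ind: "emeasure (step_measure p) ({True} \<times> UNIV \<inter> (\<lambda>s. if j = i then (False, 0) else s) -` B) =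
     emeasure (step_measure p) ({True} \<times> UNIV) * emeasure (step_measure p) ((\<lambda>s. if j = i then (False, 0) else s) -` B)"
    if "j \<in> {i}" "B \<in> sets S0" for j B
  proof -
    have "(\<lambda>s::bool\<times>real. if j = i then (False, 0) else s) -` B = (if (False, 0) \<in> B then UNIV else {})"
      using that by auto
    then show ?thesis using S.emeasure_space_1 by simp
  qed
  have "emeasure (bf_space p) {\<omega>. (\<forall>j\<in>{i}. \<omega> j \<in> {True} \<times> UNIV) \<and> (\<lambda>j. if j = i then (False, 0) else \<omega> j) \<in> D}
     = (\<Prod>j\<in>{i}. emeasure (step_measure p) ({True} \<times> UNIV)) * emeasure (PiM UNIV (\<lambda>j. distr (step_measure p) S0 (\<lambda>s. if j = i then (False, 0) else s))) D"
    by (rule keylemma[where g="\<lambda>j s. if j = i then (False, 0) else s" and W="\<lambda>_. {True} \<times> UNIV"])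
       (use ind D gm in auto)
  moreover have "emeasure (bf_space p) {\<omega>. (\<lambda>j. if j = i then (False, 0) else \<omega> j) \<in> D}
     = emeasure (PiM UNIV (\<lambda>j. distr (step_measure p) S0 (\<lambda>s. if j = i then (False, 0) else s))) D"
    using keylemma[where K="{}" and g="\<lambda>j s. if j = i then (False, 0) else s" and W="\<lambda>_. UNIV" and D=D and p=p] D gm sets.top[of S0]
    by (simp add: space_pair_measure)
  moreover have "emeasure (step_measure p) ({True} \<times> UNIV) = ennreal p"
    using p by (simp add: step_times bern_True unif_UNIV)
  ultimately show ?thesis by simp
qed


lemma f_small:
  fixes f :: "real \<Rightarrow> real" and c :: "nat \<Rightarrow> real"
  assumes c_nonneg: "\<forall>k. c k \<ge> 0"
    and c_sum: "(\<lambda>k. c (Suc k)) sums 1"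
    and f_form: "\<forall>p\<in>{0<..<1}. f p = 1 - (\<Sum>k. c (Suc k) * (1 - p) ^ Suc k)"
    and eps: "\<epsilon> > 0"
  shows "eventually (\<lambda>q. f q < \<epsilon>) (at_right 0)"
proof -
  have "(\<lambda>K. \<Sum>k<K. c (Suc k)) \<longlonglongrightarrow> 1" using c_sum by (simp add: sums_def)
  then have "eventually (\<lambda>K. (\<Sum>k<K. c (Suc k)) > 1 - \<epsilon>) sequentially"
    using eps by (intro order_tendstoD) auto
  then obtain K where K: "(\<Sum>k<K. c (Suc k)) > 1 - \<epsilon>"
    by (auto simp: eventually_sequentially)
  define h where "h q = (\<Sum>k<K. c (Suc k) * (1 - q) ^ Suc k)" for q :: real
  have "(h \<longlongrightarrow> h 0) (at_right 0)"
    unfolding h_def by (intro tendsto_intros)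
  moreover have "h 0 > 1 - \<epsilon>" using K by (simp add: h_def)
  ultimately have ev1: "eventually (\<lambda>q. h q > 1 - \<epsilon>) (at_right 0)"
    by (intro order_tendstoD)
  have ev2: "eventually (\<lambda>q. q \<in> {0<..<1}) (at_right (0::real))"
    by (rule eventually_at_right_real) simp
  show ?thesis
    using ev1 ev2
  proof eventually_elim
    case (elim q)
    have nn: "0 \<le> c (Suc k) * (1 - q) ^ Suc k" for k
      using c_nonneg elim(2) by (intro mult_nonneg_nonneg) auto
    have sm: "summable (\<lambda>k. c (Suc k) * (1 - q) ^ Suc k)"
    proof (rule summable_comparison_test'[OF sums_summable[OF c_sum]])
      fix k :: nat
      have "(1 - q) ^ Suc k \<le> 1" using elim(2) by (intro power_le_one) auto
      then show "norm (c (Suc k) * (1 - q) ^ Suc k) \<le> c (Suc k)"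
        using nn[of k] c_nonneg by (auto intro: mult_left_le)
    qed
    have "h q \<le> (\<Sum>k. c (Suc k) * (1 - q) ^ Suc k)"
      unfolding h_def using sm nn by (intro sum_le_suminf) auto
    then show ?case using f_form elim by auto
  qed
qed

lemma a_zero:
  fixes f :: "real \<Rightarrow> real" and c :: "nat \<Rightarrow> real" and a :: real
  assumes c_nonneg: "\<forall>k. c k \<ge> 0"
    and c_sum: "(\<lambda>k. c (Suc k)) sums 1"
    and f_form: "\<forall>p\<in>{0<..<1}. f p = 1 - (\<Sum>k. c (Suc k) * (1 - p) ^ Suc k)"
    and le: "\<And>q. q \<in> {0<..<1} \<Longrightarrow> (1 - q) ^ n * a \<le> f q"
  shows "a \<le> 0"
proof (rule ccontr)
  assume "\<not> a \<le> 0"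
  then have a: "a > 0" by simp
  have "((\<lambda>q. (1 - q) ^ n * a) \<longlongrightarrow> (1 - 0) ^ n * a) (at_right (0::real))"
    by (intro tendsto_intros)
  then have ev1: "eventually (\<lambda>q. (1 - q) ^ n * a > a / 2) (at_right 0)"
    using a by (intro order_tendstoD) auto
  have ev2: "eventually (\<lambda>q. f q < a / 2) (at_right 0)"
    using a by (intro f_small[OF c_nonneg c_sum f_form]) auto
  have ev3: "eventually (\<lambda>q. q \<in> {0<..<1}) (at_right (0::real))"
    by (rule eventually_at_right_real) simp
  have "eventually (\<lambda>q::real. False) (at_right 0)"
    using ev1 ev2 ev3 by eventually_elim (use le in fastforce)
  then show False by (simp add: trivial_limit_at_right_real)
qed


lemma prefixD: "depends_on_prefix n g \<Longrightarrow> (\<And>i. i < n \<Longrightarrow> \<omega> i = \<omega>' i) \<Longrightarrow> g \<omega> = g \<omega>'"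
  unfolding depends_on_prefix_def by blast

lemma stop_time_eq:
  assumes "1 \<le> n" "\<tau> n \<omega>" "\<And>k. 1 \<le> k \<Longrightarrow> k < n \<Longrightarrow> \<not> \<tau> k \<omega>"
  shows "stop_time \<tau> \<omega> = n"
  unfolding stop_time_def
proof (rule Least_equality)
  show "1 \<le> n \<and> \<tau> n \<omega>" using assms by simp
  fix y assume y: "1 \<le> y \<and> \<tau> y \<omega>"
  show "n \<le> y"
  proof (rule ccontr)
    assume "\<not> n \<le> y"
    then have "y < n" by simp
    with assms(3)[of y] y show False by simp
  qed
qed

lemma stop_time_props:
  assumes "\<exists>n\<ge>1. \<tau> n \<omega>"
  shows "1 \<le> stop_time \<tau> \<omega>" "\<tau> (stop_time \<tau> \<omega>) \<omega>" "\<And>k. 1 \<le> k \<Longrightarrow> k < stop_time \<tau> \<omega> \<Longrightarrow> \<not> \<tau> k \<omega>"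
proof -
  from assms obtain n where n: "1 \<le> n \<and> \<tau> n \<omega>" by blast
  have "1 \<le> stop_time \<tau> \<omega> \<and> \<tau> (stop_time \<tau> \<omega>) \<omega>"
    unfolding stop_time_def by (rule LeastI[of _ n]) (rule n)
  then show "1 \<le> stop_time \<tau> \<omega>" "\<tau> (stop_time \<tau> \<omega>) \<omega>" by simp_all
  fix k assume k: "1 \<le> k" "k < stop_time \<tau> \<omega>"
  have "\<not> (1 \<le> k \<and> \<tau> k \<omega>)"
    using k(2) unfolding stop_time_def by (rule not_less_Least)
  with k(1) show "\<not> \<tau> k \<omega>" by simp
qed

lemma main_bound:
  fixes f :: "real \<Rightarrow> real" and c :: "nat \<Rightarrow> real"
  assumes c_nonneg: "\<forall>k. c k \<ge> 0"
    and c_sum: "(\<lambda>k. c (Suc k)) sums 1"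
    and f_form: "\<forall>p\<in>{0<..<1}. f p = 1 - (\<Sum>k. c (Suc k) * (1 - p) ^ Suc k)"
    and bfac: "bernoulli_factory f \<tau> \<gamma>"
    and p: "p \<in> {0<..<1}"
  shows "ennreal (f p) \<le> ennreal p * expected_time p \<tau>"
proof -
  have tm: "\<And>n. 1 \<le> n \<Longrightarrow> \<tau> n \<in> measurable seq_space (count_space UNIV)"
   and tp: "\<And>n. 1 \<le> n \<Longrightarrow> depends_on_prefix n (\<tau> n)"
   and gm: "\<And>n. 1 \<le> n \<Longrightarrow> \<gamma> n \<in> measurable seq_space (count_space UNIV)"
   and gp: "\<And>n. 1 \<le> n \<Longrightarrow> depends_on_prefix n (\<gamma> n)"
   and AEs: "\<And>q. q \<in> {0<..<1} \<Longrightarrow> AE \<omega> in bf_space q. \<exists>n\<ge>1. \<tau> n \<omega>"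
   and prb: "\<And>q. q \<in> {0<..<1} \<Longrightarrow> measure (bf_space q) {\<omega> \<in> space (bf_space q). (\<exists>n\<ge>1. \<tau> n \<omega>) \<and> \<gamma> (stop_time \<tau> \<omega>) \<omega>} = f q"
    using bfac unfolding bernoulli_factory_def by auto
  define \<tau>' where "\<tau>' k = (if 1 \<le> k then \<tau> k else (\<lambda>_. False))" for k
  define \<gamma>' where "\<gamma>' k = (if 1 \<le> k then \<gamma> k else (\<lambda>_. False))" for k
  have [measurable]: "\<tau>' k \<in> measurable seq_space (count_space UNIV)" for k
    using tm by (simp add: \<tau>'_def)
  have [measurable]: "\<gamma>' k \<in> measurable seq_space (count_space UNIV)" for k
    using gm by (simp add: \<gamma>'_def)
  define Dn where "Dn n = {\<omega>. \<tau>' n \<omega> \<and> (\<forall>k\<in>{1..<n}. \<not> \<tau>' k \<omega>) \<and> \<gamma>' n \<omega>}" for n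
  define Ri where "Ri i = {\<omega>. \<forall>k\<in>{1..i}. \<not> \<tau>' k \<omega>}" for i
  define Good where "Good = {\<omega>. (\<exists>n\<ge>1. \<tau> n \<omega>) \<and> \<gamma> (stop_time \<tau> \<omega>) \<omega>}"
  define En where "En n = {\<omega>. (\<forall>j\<in>{..<n}. \<omega> j \<in> {False} \<times> UNIV) \<and> (\<lambda>j. (False, snd (\<omega> j))) \<in> Dn n}" for n
  define Hi where "Hi i = {\<omega>. \<omega> i \<in> {True} \<times> UNIV \<and> (\<lambda>j. if j = i then (False, 0) else \<omega> j) \<in> Ri i}" for i
  have Dn_sets: "Dn n \<in> sets seq_space" for n
  proof -
    have "Dn n = {\<omega> \<in> space seq_space. \<tau>' n \<omega> \<and> (\<forall>k\<in>{1..<n}. \<not> \<tau>' k \<omega>) \<and> \<gamma>' n \<omega>}"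
      by (simp add: Dn_def)
    also have "\<dots> \<in> sets seq_space" by measurable
    finally show ?thesis .
  qed
  have Ri_sets: "Ri i \<in> sets seq_space" for i
  proof -
    have "Ri i = {\<omega> \<in> space seq_space. \<forall>k\<in>{1..i}. \<not> \<tau>' k \<omega>}"
      by (simp add: Ri_def)
    also have "\<dots> \<in> sets seq_space" by measurable
    finally show ?thesis .
  qed
  have Good_eq: "Good = (\<Union>n. Dn (Suc n))"
  proof (intro set_eqI iffI)
    fix \<omega> assume "\<omega> \<in> Good"
    then have ex: "\<exists>n\<ge>1. \<tau> n \<omega>" and g: "\<gamma> (stop_time \<tau> \<omega>) \<omega>" by (auto simp: Good_def)
    note st = stop_time_props[of \<tau> \<omega>, OF ex]
    have "Suc (stop_time \<tau> \<omega> - 1) = stop_time \<tau> \<omega>" using st(1) by simp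
    moreover have "\<omega> \<in> Dn (stop_time \<tau> \<omega>)"
      using st g by (auto simp: Dn_def \<tau>'_def \<gamma>'_def)
    ultimately show "\<omega> \<in> (\<Union>n. Dn (Suc n))" by (metis UN_iff UNIV_I)
  next
    fix \<omega> assume "\<omega> \<in> (\<Union>n. Dn (Suc n))"
    then obtain n where "\<omega> \<in> Dn (Suc n)" by blast
    then have a: "\<tau> (Suc n) \<omega>" "\<And>k. 1 \<le> k \<Longrightarrow> k < Suc n \<Longrightarrow> \<not> \<tau> k \<omega>" "\<gamma> (Suc n) \<omega>"
      by (auto simp: Dn_def \<tau>'_def \<gamma>'_def)
    have "stop_time \<tau> \<omega> = Suc n" by (rule stop_time_eq) (use a in auto)
    then show "\<omega> \<in> Good" using a by (auto simp: Good_def)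
  qed
  have Good_sets: "Good \<in> sets (bf_space q)" for q
  proof -
    have "(\<Union>n. Dn (Suc n)) \<in> sets seq_space" using Dn_sets by (intro sets.countable_nat_UN) auto
    then show ?thesis by (simp add: Good_eq sets_bf)
  qed
  have fq: "ennreal (f q) = emeasure (bf_space q) Good" if q: "q \<in> {0<..<1}" for q
  proof -
    interpret Q: prob_space "bf_space q" by (rule prob_bf)
    show ?thesis using prb[OF q] Good_sets[of q] Q.emeasure_eq_measure[of Good] by (simp add: Good_def)
  qed
  have f_nonneg: "0 \<le> f q" if q: "q \<in> {0<..<1}" for q
    using measure_nonneg[of "bf_space q"] unfolding prb[OF q, symmetric] by blast
  have En_sub: "En (Suc n) \<subseteq> Good" for n
  proof
    fix \<omega> assume w: "\<omega> \<in> En (Suc n)"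
    let ?z = "\<lambda>j. (False, snd (\<omega> j))"
    have F: "\<forall>j\<in>{..<Suc n}. \<omega> j \<in> {False} \<times> UNIV" and zD: "?z \<in> Dn (Suc n)" using w by (auto simp: En_def)
    have eqi: "?z i = \<omega> i" if "i < Suc n" for i using bspec[OF F, of i] that by (cases "\<omega> i") auto
    have tk: "\<tau> k ?z = \<tau> k \<omega>" if "1 \<le> k" "k \<le> Suc n" for k
      by (rule prefixD[OF tp[OF that(1)]]) (use eqi that in auto)
    have gk: "\<gamma> (Suc n) ?z = \<gamma> (Suc n) \<omega>"
      by (rule prefixD[OF gp]) (use eqi in auto)
    from zD tk gk have "\<omega> \<in> Dn (Suc n)" by (auto simp: Dn_def \<tau>'_def \<gamma>'_def)
    then show "\<omega> \<in> Good" unfolding Good_eq by blast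
  qed
  define a where "a n = emeasure (PiM UNIV (\<lambda>_. Z1)) (Dn n)" for n
  have Z1prob: "prob_space Z1"
    unfolding Z1_def
    by (intro prob_space.prob_space_distr prob_space_uniform_measure)
       (auto simp: measurable_cong_sets[OF sets_uniform_measure refl])
  have a_fin: "a n \<le> 1" for n
    unfolding a_def by (intro prob_space.emeasure_le_1 prob_space_PiM Z1prob)
  have En_eq: "emeasure (bf_space q) (En n) = ennreal ((1 - q) ^ n) * a n" if "q \<in> {0<..<1}" for q n
    unfolding En_def a_def using that Dn_sets by (intro En_meas) auto
  have a0: "a (Suc n) = 0" for n
  proof -
    let ?a = "enn2real (a (Suc n))"
    have "a (Suc n) \<noteq> \<top>" using a_fin[of "Suc n"] by (metis ennreal_one_neq_top top_unique)
    then have ae: "a (Suc n) = ennreal ?a" by (simp add: ennreal_enn2real_if)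
    have le: "(1 - q) ^ Suc n * ?a \<le> f q" if q: "q \<in> {0<..<1}" for q
    proof -
      have "ennreal ((1 - q) ^ Suc n * ?a) = emeasure (bf_space q) (En (Suc n))"
        using En_eq[OF q] ae q by (simp add: ennreal_mult)
      also have "\<dots> \<le> emeasure (bf_space q) Good" by (rule emeasure_mono[OF En_sub Good_sets])
      also have "\<dots> = ennreal (f q)" using fq[OF q] by simp
      finally show ?thesis using f_nonneg[OF q] by (simp add: ennreal_le_iff)
    qed
    have "?a \<le> 0" by (rule a_zero[OF c_nonneg c_sum f_form le])
    then have "?a = 0" using enn2real_nonneg[of "a (Suc n)"] by linarith
    then show ?thesis using ae by simp
  qed
  have yeq: "\<tau>' k (\<lambda>j'. if j' = j then (False, 0) else \<omega> j') = \<tau>' k \<omega>" if "k \<in> {1..j}" for k j \<omega>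
  proof -
    have "\<tau> k (\<lambda>j'. if j' = j then (False, 0) else \<omega> j') = \<tau> k \<omega>"
      by (rule prefixD[OF tp]) (use that in auto)
    then show ?thesis using that by (simp add: \<tau>'_def)
  qed
  have Hi_eq: "emeasure (bf_space p) (Hi i) = ennreal p * emeasure (bf_space p) (Ri i)" for i
  proof -
    have seteq: "{\<omega>. (\<lambda>j. if j = i then (False, 0) else \<omega> j) \<in> Ri i} = Ri i"
      using yeq[of _ i] by (auto simp: Ri_def)
    show ?thesis using Hi_meas[of p "Ri i" i] p Ri_sets seteq by (simp add: Hi_def)
  qed
  have cover: "Good \<subseteq> (\<Union>n. En (Suc n)) \<union> (\<Union>i. Hi i)"
  proof
    fix \<omega> assume "\<omega> \<in> Good"
    then have ex: "\<exists>n\<ge>1. \<tau> n \<omega>" and g: "\<gamma> (stop_time \<tau> \<omega>) \<omega>" by (auto simp: Good_def)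
    note st = stop_time_props[of \<tau> \<omega>, OF ex]
    define N where "N = stop_time \<tau> \<omega>"
    show "\<omega> \<in> (\<Union>n. En (Suc n)) \<union> (\<Union>i. Hi i)"
    proof (cases "\<exists>j<N. fst (\<omega> j)")
      case True
      then obtain j where j: "j < N" "fst (\<omega> j)" by blast
      have "\<not> \<tau>' k \<omega>" if "k \<in> {1..j}" for k using st(3)[of k] that j by (auto simp: \<tau>'_def N_def)
      then have "\<omega> \<in> Hi j" using j(2) yeq[of _ j \<omega>] by (auto simp: Hi_def Ri_def mem_Times_iff)
      then show ?thesis by blast
    next
      case False
      let ?z = "\<lambda>j. (False, snd (\<omega> j))"
      have eqi: "?z i = \<omega> i" if "i < N" for i using False that by (cases "\<omega> i") auto
      have tk: "\<tau> k ?z = \<tau> k \<omega>" if "1 \<le> k" "k \<le> N" for k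
        by (rule prefixD[OF tp[OF that(1)]]) (use eqi that in auto)
      have gk: "\<gamma> N ?z = \<gamma> N \<omega>"
        by (rule prefixD[OF gp]) (use eqi st(1) in \<open>auto simp: N_def\<close>)
      have "?z \<in> Dn N" using st g tk gk by (auto simp: Dn_def \<tau>'_def \<gamma>'_def N_def)
      moreover have "\<forall>j\<in>{..<N}. \<omega> j \<in> {False} \<times> UNIV" using False by (auto simp: mem_Times_iff)
      ultimately have "\<omega> \<in> En N" by (simp add: En_def)
      moreover have "N = Suc (N - 1)" using st(1) by (simp add: N_def)
      ultimately show ?thesis by (metis UN_iff UNIV_I UnI1)
    qed
  qed
  have En_sets: "En n \<in> sets (bf_space p)" for n
    unfolding En_def
    by (rule keyset[where g="\<lambda>_ s. (False, snd s)"]) (use Dn_sets z1_meas in auto)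
  have Hi_sets: "Hi i \<in> sets (bf_space p)" for i
  proof -
    have gm: "(\<lambda>s::bool\<times>real. if j = i then (False, 0) else s) \<in> measurable S0 S0" for j
      by (cases "j = i") auto
    have "{\<omega>. (\<forall>j\<in>{i}. \<omega> j \<in> {True} \<times> UNIV) \<and> (\<lambda>j. if j = i then (False, 0) else \<omega> j) \<in> Ri i} \<in> sets (bf_space p)"
      by (rule keyset[where g="\<lambda>j s. if j = i then (False, 0) else s"]) (use Ri_sets gm in auto)
    then show ?thesis by (simp add: Hi_def)
  qed
  have "ennreal (f p) = emeasure (bf_space p) Good" by (rule fq[OF p])
  also have "\<dots> \<le> emeasure (bf_space p) ((\<Union>n. En (Suc n)) \<union> (\<Union>i. Hi i))"
    by (rule emeasure_mono[OF cover]) (use En_sets Hi_sets in auto)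
  also have "\<dots> \<le> emeasure (bf_space p) (\<Union>n. En (Suc n)) + emeasure (bf_space p) (\<Union>i. Hi i)"
    by (rule emeasure_subadditive) (use En_sets Hi_sets in auto)
  also have "emeasure (bf_space p) (\<Union>n. En (Suc n)) \<le> (\<Sum>n. emeasure (bf_space p) (En (Suc n)))"
    by (rule emeasure_subadditive_countably) (use En_sets in auto)
  also have "(\<Sum>n. emeasure (bf_space p) (En (Suc n))) = 0"
    using En_eq[OF p] a0 by simp
  also have "emeasure (bf_space p) (\<Union>i. Hi i) \<le> (\<Sum>i. emeasure (bf_space p) (Hi i))"
    by (rule emeasure_subadditive_countably) (use Hi_sets in auto)
  also have "(\<Sum>i. emeasure (bf_space p) (Hi i)) = ennreal p * (\<Sum>i. emeasure (bf_space p) (Ri i))"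
    unfolding Hi_eq by (rule ennreal_suminf_cmult)
  also have "(\<Sum>i. emeasure (bf_space p) (Ri i)) = expected_time p \<tau>"
  proof -
    have "expected_time p \<tau> = (\<integral>\<^sup>+ \<omega>. (\<Sum>i. indicator (Ri i) \<omega>) \<partial>bf_space p)"
      unfolding expected_time_def
    proof (rule nn_integral_cong_AE)
      show "AE \<omega> in bf_space p. ennreal (real (stop_time \<tau> \<omega>)) = (\<Sum>i. indicator (Ri i) \<omega>)"
        using AEs[OF p]
      proof eventually_elim
        case (elim \<omega>)
        note st = stop_time_props[of \<tau> \<omega>, OF elim]
        have ind: "indicator (Ri i) \<omega> = (if i < stop_time \<tau> \<omega> then 1 else (0::ennreal))" for i
        proof (cases "i < stop_time \<tau> \<omega>")
          case True then show ?thesis using st(3) by (auto simp: Ri_def \<tau>'_def indicator_def)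
        next
          case False
          then have "stop_time \<tau> \<omega> \<in> {1..i}" using st(1) by auto
          then have "\<omega> \<notin> Ri i" using st(2) st(1) unfolding Ri_def \<tau>'_def by auto
          then show ?thesis using False by simp
        qed
        have "(\<Sum>i. indicator (Ri i) \<omega> :: ennreal) = (\<Sum>i<stop_time \<tau> \<omega>. (1::ennreal))"
          unfolding ind by (subst suminf_finite[of "{..<stop_time \<tau> \<omega>}"]) auto
        then show ?case by (simp add: ennreal_of_nat_eq_real_of_nat)
      qed
    qed
    also have "\<dots> = (\<Sum>i. \<integral>\<^sup>+ \<omega>. indicator (Ri i) \<omega> \<partial>bf_space p)"
      by (rule nn_integral_suminf) (use Ri_sets in \<open>auto simp: sets_bf\<close>)
    also have "\<dots> = (\<Sum>i. emeasure (bf_space p) (Ri i))"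
      using Ri_sets by (simp add: sets_bf)
    finally show ?thesis by simp
  qed
  finally show ?thesis by simp
qed


theorem corollary1:
  fixes f :: "real \<Rightarrow> real" and c :: "nat \<Rightarrow> real"
  assumes range_f: "\<forall>p\<in>{0<..<1}. f p \<in> {0<..<1}"
    and c_nonneg: "\<forall>k. c k \<ge> 0"
    and c_sum: "(\<lambda>k. c (Suc k)) sums 1"
    and f_form: "\<forall>p\<in>{0<..<1}. f p = 1 - (\<Sum>k. c (Suc k) * (1 - p) ^ Suc k)"
    and f_lim: "filterlim (\<lambda>p. f p / p) at_top (at_right 0)"
    and f_deriv: "\<exists>C>0. \<exists>\<delta>>0. \<forall>p. 0 < p \<and> p < \<delta> \<longrightarrow> deriv f p \<ge> C * (f p / p)"
  shows "\<forall>\<tau> \<gamma>. fast_factory f \<tau> \<gamma> \<longrightarrow>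
           (\<exists>C>0. \<exists>\<delta>>0. \<forall>p\<in>{0<..<1}. p < \<delta> \<longrightarrow>
              expected_time p \<tau> \<ge> ennreal (C * f p / p))"
proof (intro allI impI)
  fix \<tau> \<gamma> assume "fast_factory f \<tau> \<gamma>"
  then have bfac: "bernoulli_factory f \<tau> \<gamma>" by (simp add: fast_factory_def)
  show "\<exists>C>0. \<exists>\<delta>>0. \<forall>p\<in>{0<..<1}. p < \<delta> \<longrightarrow> expected_time p \<tau> \<ge> ennreal (C * f p / p)"
  proof (intro exI[of _ "1::real"] conjI ballI impI)
    fix p :: real assume p: "p \<in> {0<..<1}"
    have fp: "0 \<le> f p" using bspec[OF range_f p] by simp
    have pp: "0 < p" using p by simp
    have main: "ennreal (f p) \<le> ennreal p * expected_time p \<tau>"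
      by (rule main_bound[OF c_nonneg c_sum f_form bfac p])
    have "ennreal (1 * f p / p) = ennreal (f p) * ennreal (1 / p)"
      using fp pp by (simp add: ennreal_mult[symmetric] divide_inverse)
    also have "\<dots> \<le> ennreal p * expected_time p \<tau> * ennreal (1 / p)"
      by (rule mult_right_mono[OF main]) simp
    also have "\<dots> = expected_time p \<tau> * (ennreal p * ennreal (1 / p))"
      by (simp add: ac_simps)
    also have "ennreal p * ennreal (1 / p) = 1"
      using pp by (simp add: ennreal_mult[symmetric])
    finally show "ennreal (1 * f p / p) \<le> expected_time p \<tau>" by simp
  qed simp_all
qed

end
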